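(* For $m>0$ consider the soft second-price mechanism on $n$ users with bids $\mathbf b=(b_1,\dots,b_n)$: \[a_i(\mathbf b)=\frac{e^{mb_i}}{\sum_{j=1}^n e^{mb_j}},\qquad p_i(\mathbf b)=b_i-\frac{\sum_{j=1}^n e^{mb_j}}{m e^{mb_i}}\ln\frac{\sum_{j=1}^n e^{mb_j}}{1+\sum_{j\ne i}e^{mb_j}}.\] Suppose the bids are distinct and lie in $(0,1)$, and let $b_{(1)}>b_{(2)}>\cdots>b_{(n)}$ be the bids in decreasing order. Then \[\lim_{m\to+\infty}a_i(\mathbf b)=\begin{cases}1,&b_i=b_{(1)}\\0,&b_i\ne b_{(1)}\end{cases},\qquad \lim_{m\to+\infty}p_i(\mathbf b)=\min\{b_i,b_{(2)}\}.\] *)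

theory Defs
  imports Complex_Main
begin

text \<open>Users are indexed by 0, ..., n-1; bids are a function b :: nat => real.\<close>

definition soft_alloc :: "nat \<Rightarrow> real \<Rightarrow> (nat \<Rightarrow> real) \<Rightarrow> nat \<Rightarrow> real" where
  "soft_alloc n m b i = exp (m * b i) / (\<Sum>j<n. exp (m * b j))"

definition soft_pay :: "nat \<Rightarrow> real \<Rightarrow> (nat \<Rightarrow> real) \<Rightarrow> nat \<Rightarrow> real" where
  "soft_pay n m b i = b i - (\<Sum>j<n. exp (m * b j)) / (m * exp (m * b i)) *
     ln ((\<Sum>j<n. exp (m * b j)) / (1 + (\<Sum>j\<in>{..<n} - {i}. exp (m * b j))))"

definition top_bid :: "nat \<Rightarrow> (nat \<Rightarrow> real) \<Rightarrow> real" where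
  "top_bid n b = Max (b ` {..<n})"

definition second_bid :: "nat \<Rightarrow> (nat \<Rightarrow> real) \<Rightarrow> real" where
  "second_bid n b = Max (b ` {..<n} - {top_bid n b})"

end

theory Submission
  imports Defs
begin

lemma exp_lim:
  fixes c :: real assumes "c \<le> 0"
  shows "((\<lambda>m::real. exp (m*c)) \<longlongrightarrow> (if c = 0 then 1 else 0)) at_top"
proof (cases "c = 0")
  case True then show ?thesis by simp
next
  case False
  then have "c < 0" using assms by simp
  have "filterlim (\<lambda>m::real. c*m) at_bot at_top"
    using \<open>c < 0\<close> by (intro filterlim_tendsto_neg_mult_at_bot[OF tendsto_const] filterlim_ident)
  then have "filterlim (\<lambda>m::real. m*c) at_bot at_top" by (simp add: mult.commute)
  then have "((\<lambda>m::real. exp (m*c)) \<longlongrightarrow> 0) at_top"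
    using exp_at_bot filterlim_compose by blast
  then show ?thesis using False by simp
qed

lemma sum_lim:
  fixes c :: "nat \<Rightarrow> real"
  assumes "finite A" "\<And>j. j \<in> A \<Longrightarrow> c j \<le> 0"
  shows "((\<lambda>m::real. \<Sum>j\<in>A. exp (m * c j)) \<longlongrightarrow> real (card {j\<in>A. c j = 0})) at_top"
proof -
  have "((\<lambda>m::real. \<Sum>j\<in>A. exp (m * c j)) \<longlongrightarrow> (\<Sum>j\<in>A. (if c j = 0 then 1 else 0))) at_top"
    by (rule tendsto_sum) (use assms exp_lim in auto)
  moreover have "(\<Sum>j\<in>A. (if c j = 0 then 1 else 0)) = real (card {j\<in>A. c j = 0})"
    using assms(1) by (simp add: sum.If_cases Collect_conj_eq Int_commute)
  ultimately show ?thesis by simp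
qed

lemma ln_over_m:
  fixes f :: "real \<Rightarrow> real"
  assumes "(f \<longlongrightarrow> L) at_top" "L > 0"
  shows "((\<lambda>m. ln (f m) / m) \<longlongrightarrow> 0) at_top"
proof -
  have "((\<lambda>m. ln (f m) * inverse m) \<longlongrightarrow> ln L * 0) at_top"
    by (intro tendsto_mult tendsto_ln assms tendsto_inverse_0_at_top filterlim_ident) (use assms in auto)
  then show ?thesis by (simp add: divide_inverse)
qed

lemma bids_setup:
  fixes n :: nat and b :: "nat \<Rightarrow> real"
  assumes "n \<ge> 2" "inj_on b {..<n}"
  obtains k k2 where "k < n" "k2 < n" "k \<noteq> k2" "b k = top_bid n b" "b k2 = second_bid n b"
    "\<And>j. j < n \<Longrightarrow> b j \<le> top_bid n b"
    "\<And>j. j < n \<Longrightarrow> j \<noteq> k \<Longrightarrow> b j \<le> second_bid n b"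
    "second_bid n b < top_bid n b"
proof -
  define B where "B = b ` {..<n}"
  have fin: "finite B" "B \<noteq> {}" using assms(1) by (auto simp: B_def lessThan_empty_iff)
  have "top_bid n b \<in> B" unfolding top_bid_def B_def[symmetric] using fin by (rule Max_in)
  then obtain k where k: "k < n" "b k = top_bid n b" by (auto simp: B_def)
  have le: "b j \<le> top_bid n b" if "j < n" for j
    unfolding top_bid_def using that by (intro Max_ge) auto
  obtain j0 where j0: "j0 < n" "j0 \<noteq> k" using assms(1)
    by (metis One_nat_def Suc_1 Suc_le_lessD less_trans_Suc nat_neq_iff zero_less_Suc)
  have ne: "b j \<noteq> top_bid n b" if "j < n" "j \<noteq> k" for j
    using assms(2) k that by (metis inj_onD lessThan_iff)
  have fin2: "finite (B - {top_bid n b})" "B - {top_bid n b} \<noteq> {}"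
    using fin j0 ne[OF j0] by (auto simp: B_def)
  have "second_bid n b \<in> B - {top_bid n b}"
    unfolding second_bid_def B_def[symmetric] using fin2 by (rule Max_in)
  then obtain k2 where k2: "k2 < n" "b k2 = second_bid n b" "second_bid n b \<noteq> top_bid n b"
    by (auto simp: B_def)
  have le2: "b j \<le> second_bid n b" if "j < n" "j \<noteq> k" for j
    unfolding second_bid_def using that ne[OF that] by (intro Max_ge) auto
  have "k \<noteq> k2" using k k2 by auto
  moreover have "second_bid n b < top_bid n b" using le[OF k2(1)] k2 by auto
  ultimately show ?thesis using that k k2 le le2 by blast
qed

lemma exp_shift: "exp (m * x) = exp (m * c) * exp (m * (x - c))" for m x c :: real
  by (simp add: exp_add[symmetric] algebra_simps)

lemma sum_shift: "(\<Sum>j\<in>A. exp (m * b j)) = exp (m * c) * (\<Sum>j\<in>A. exp (m * (b j - c)))"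
  for m c :: real and b :: "nat \<Rightarrow> real"
  unfolding sum_distrib_left by (rule sum.cong[OF refl]) (rule exp_shift)

lemma card_unique:
  fixes b :: "nat \<Rightarrow> real"
  assumes "inj_on b A" "a \<in> A" "finite A"
  shows "card {j\<in>A. b j - b a = 0} = 1"
proof -
  have "{j\<in>A. b j - b a = 0} = {a}" using assms by (auto simp: inj_on_eq_iff)
  then show ?thesis by simp
qed

theorem mainTheorem6:
  fixes n :: nat and b :: "nat \<Rightarrow> real"
  assumes "n \<ge> 2"
    and "inj_on b {..<n}"
    and "\<And>j. j < n \<Longrightarrow> 0 < b j \<and> b j < 1"
    and "i < n"
  shows "((\<lambda>m. soft_alloc n m b i) \<longlongrightarrow> (if b i = top_bid n b then 1 else 0)) at_top \<and>
         ((\<lambda>m. soft_pay n m b i) \<longlongrightarrow> min (b i) (second_bid n b)) at_top"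
proof -
  obtain k k2 where kk: "k < n" "k2 < n" "k \<noteq> k2" "b k = top_bid n b" "b k2 = second_bid n b"
    and leT: "\<And>j. j < n \<Longrightarrow> b j \<le> top_bid n b"
    and les: "\<And>j. j < n \<Longrightarrow> j \<noteq> k \<Longrightarrow> b j \<le> second_bid n b"
    and sT: "second_bid n b < top_bid n b"
    using bids_setup[OF assms(1,2)] by blast
  define T where "T = top_bid n b"
  define s where "s = second_bid n b"
  define F1 where "F1 = (\<lambda>m::real. \<Sum>j<n. exp (m * (b j - T)))"
  have F1_lim: "(F1 \<longlongrightarrow> 1) at_top"
  proof -
    have "(F1 \<longlongrightarrow> real (card {j\<in>{..<n}. b j - b k = 0})) at_top"
      unfolding F1_def T_def kk(4)[symmetric] by (rule sum_lim) (use leT kk in auto)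
    then show ?thesis using card_unique[OF assms(2), of k] kk by simp
  qed
  have F1_pos: "F1 m > 0" for m
    unfolding F1_def using kk(1) by (intro sum_pos) auto
  have S_eq: "(\<Sum>j<n. exp (m * b j)) = exp (m * T) * F1 m" for m
    unfolding F1_def by (rule sum_shift)
  have s_pos: "s > 0" using assms(3)[OF kk(2)] kk(5) unfolding s_def by auto
  show ?thesis
  proof (cases "b i = T")
    case True
    then have ik: "i = k" using assms(2,4) kk unfolding T_def by (metis inj_onD lessThan_iff)
    have alloc: "soft_alloc n m b i = 1 / F1 m" for m
      unfolding soft_alloc_def S_eq True using F1_pos[of m] by simp
    have A: "((\<lambda>m. soft_alloc n m b i) \<longlongrightarrow> 1) at_top"
      unfolding alloc using tendsto_divide[OF tendsto_const F1_lim, of 1] by simp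
    define F2 where "F2 = (\<lambda>m::real. exp (m * (-s)) + (\<Sum>j\<in>{..<n}-{i}. exp (m * (b j - s))))"
    have F2_lim: "(F2 \<longlongrightarrow> 0 + 1) at_top"
    proof -
      have "((\<lambda>m::real. exp (m * (-s))) \<longlongrightarrow> (if -s = 0 then 1 else 0)) at_top"
        by (rule exp_lim) (use s_pos in auto)
      then have a: "((\<lambda>m::real. exp (m * (-s))) \<longlongrightarrow> 0) at_top" using s_pos by simp
      have "((\<lambda>m::real. \<Sum>j\<in>{..<n}-{i}. exp (m * (b j - b k2))) \<longlongrightarrow> real (card {j\<in>{..<n}-{i}. b j - b k2 = 0})) at_top"
        by (rule sum_lim) (use les kk ik in auto)
      moreover have "card {j\<in>{..<n}-{i}. b j - b k2 = 0} = 1"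
        by (rule card_unique) (use assms(2) kk ik in \<open>auto intro: inj_on_subset\<close>)
      ultimately have "((\<lambda>m::real. \<Sum>j\<in>{..<n}-{i}. exp (m * (b j - s))) \<longlongrightarrow> 1) at_top"
        using kk unfolding s_def by simp
      with a show ?thesis unfolding F2_def by (rule tendsto_add)
    qed
    have F2_pos: "F2 m > 0" for m
      unfolding F2_def by (intro add_pos_nonneg sum_nonneg) auto
    have R_eq: "1 + (\<Sum>j\<in>{..<n}-{i}. exp (m * b j)) = exp (m * s) * F2 m" for m
    proof -
      have "exp (m * s) * exp (m * (-s)) = 1" by (simp add: exp_minus)
      then show ?thesis
        unfolding F2_def distrib_left sum_shift[where m=m and c=s, symmetric] by simp
    qed
    have pay: "soft_pay n m b i = T - F1 m * (T - s + ln (F1 m) / m - ln (F2 m) / m)" if "m > 0" for m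
    proof -
      have "ln ((exp (m * T) * F1 m) / (exp (m * s) * F2 m)) = m * T + ln (F1 m) - (m * s + ln (F2 m))"
        using F1_pos[of m] F2_pos[of m] by (simp add: ln_div ln_mult)
      moreover have e: "exp (m * b i) = exp (m * T)" using True by simp
      moreover have "exp (m * T) * F1 m / (m * exp (m * T)) = F1 m / m" by simp
      ultimately have "soft_pay n m b i = T - F1 m / m * (m * T + ln (F1 m) - (m * s + ln (F2 m)))"
        unfolding soft_pay_def S_eq R_eq using True by simp
      also have "\<dots> = T - F1 m * ((m * T + ln (F1 m) - (m * s + ln (F2 m))) / m)" by simp
      also have "(m * T + ln (F1 m) - (m * s + ln (F2 m))) / m = T - s + ln (F1 m) / m - ln (F2 m) / m"
        using that by (simp add: diff_divide_distrib add_divide_distrib)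
      finally show ?thesis .
    qed
    have "((\<lambda>m. T - F1 m * (T - s + ln (F1 m) / m - ln (F2 m) / m)) \<longlongrightarrow> T - 1 * (T - s + 0 - 0)) at_top"
      by (rule tendsto_diff[OF tendsto_const tendsto_mult[OF F1_lim tendsto_diff[OF tendsto_add[OF tendsto_const ln_over_m[OF F1_lim]] ln_over_m[OF F2_lim]]]]) auto
    then have lim1: "((\<lambda>m. T - F1 m * (T - s + ln (F1 m) / m - ln (F2 m) / m)) \<longlongrightarrow> s) at_top"
      by simp
    have ev1: "\<forall>\<^sub>F m in at_top. T - F1 m * (T - s + ln (F1 m) / m - ln (F2 m) / m) = soft_pay n m b i"
      using eventually_gt_at_top[of "0::real"] by (rule eventually_mono) (simp add: pay)
    have "((\<lambda>m. soft_pay n m b i) \<longlongrightarrow> s) at_top"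
      by (rule Lim_transform_eventually[OF lim1 ev1])
    moreover have "min (b i) (second_bid n b) = s" using True sT unfolding s_def T_def by simp
    ultimately show ?thesis using A True unfolding T_def by simp
  next
    case False
    then have ik: "i \<noteq> k" using kk unfolding T_def by auto
    have biT: "b i < T" using leT[OF assms(4)] False unfolding T_def by simp
    have A: "((\<lambda>m. soft_alloc n m b i) \<longlongrightarrow> 0) at_top"
    proof (rule tendsto_sandwich)
      show "\<forall>\<^sub>F m in at_top. 0 \<le> soft_alloc n m b i"
        unfolding soft_alloc_def by (intro always_eventually allI divide_nonneg_nonneg sum_nonneg) auto
      show "\<forall>\<^sub>F m in at_top. soft_alloc n m b i \<le> exp (m * (b i - T))"
        using eventually_gt_at_top[of 0]
      proof (rule eventually_mono)
        fix m :: real assume "m > 0"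
        have "exp (m * T) \<le> (\<Sum>j<n. exp (m * b j))"
          using member_le_sum[of k "{..<n}" "\<lambda>j. exp (m * b j)"] kk unfolding T_def by auto
        then have "soft_alloc n m b i \<le> exp (m * b i) / exp (m * T)"
          unfolding soft_alloc_def by (intro divide_left_mono mult_pos_pos) (auto intro: order.strict_trans2[OF exp_gt_zero])
        moreover have "exp (m * (b i - T)) = exp (m * b i) / exp (m * T)"
          by (simp add: right_diff_distrib exp_diff)
        ultimately show "soft_alloc n m b i \<le> exp (m * (b i - T))" by simp
      qed
      show "((\<lambda>m. 0) \<longlongrightarrow> (0::real)) at_top" by simp
      have "((\<lambda>m::real. exp (m * (b i - T))) \<longlongrightarrow> (if b i - T = 0 then 1 else 0)) at_top"
        by (rule exp_lim) (use biT in auto)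
      then show "((\<lambda>m::real. exp (m * (b i - T))) \<longlongrightarrow> 0) at_top" using biT by simp
    qed
    have bnd: "0 \<le> b i - soft_pay n m b i \<and> b i - soft_pay n m b i \<le> real n / m" if "m > 0" for m
    proof -
      define S where "S = (\<Sum>j<n. exp (m * b j))"
      define R where "R = 1 + (\<Sum>j\<in>{..<n}-{i}. exp (m * b j))"
      define e where "e = exp (m * b i)"
      have e1: "e \<ge> 1" unfolding e_def using that assms(3)[OF assms(4)] by simp
      have Ssplit: "S = e + (R - 1)" unfolding S_def R_def e_def
        using sum.remove[of "{..<n}" i "\<lambda>j. exp (m * b j)"] assms(4) by simp
      have "exp (m * T) \<le> (\<Sum>j\<in>{..<n}-{i}. exp (m * b j))"
        using member_le_sum[of k "{..<n}-{i}" "\<lambda>j. exp (m * b j)"] kk ik unfolding T_def by auto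
      then have RT: "exp (m * T) \<le> R" unfolding R_def by simp
      have Rpos: "R > 0" using RT by (smt (verit) exp_gt_zero)
      have "S \<le> real (card {..<n}) * exp (m * T)" unfolding S_def
        by (rule sum_bounded_above) (use leT that in \<open>auto simp: T_def\<close>)
      moreover have "real n * exp (m * T) \<le> real n * R" by (rule mult_left_mono[OF RT]) simp
      ultimately have Sn: "S \<le> real n * R" by simp
      have SR: "S \<ge> R" using Ssplit e1 by linarith
      have pay_eq: "b i - soft_pay n m b i = S / (m * e) * ln (S / R)"
        unfolding soft_pay_def S_def R_def e_def by simp
      have Spos: "S > 0" using SR Rpos by linarith
      have epos: "e > 0" using e1 by linarith
      have "S / R \<ge> 1" using SR Rpos by simp
      then have ln0: "ln (S / R) \<ge> 0" by simp
      have "S / R - 1 = (S - R) / R" using Rpos by (simp add: diff_divide_distrib)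
      also have "S - R = e - 1" using Ssplit by linarith
      finally have "S / R - 1 = (e - 1) / R" .
      then have ln1: "ln (S / R) \<le> (e - 1) / R"
        using ln_le_minus_one[of "S / R"] Rpos Spos by simp
      have c0: "S / (m * e) \<ge> 0" using Spos epos that by simp
      have c1: "(e - 1) / e \<le> 1" using epos by simp
      have c2: "S / (m * R) \<ge> 0" using Spos Rpos that by simp
      have c3: "S / R \<le> real n" using Sn Rpos by (simp add: divide_le_eq mult.commute)
      have "S / (m * e) * ln (S / R) \<le> S / (m * e) * ((e - 1) / R)"
        using ln1 c0 by (rule mult_left_mono)
      also have "\<dots> = (S / (m * R)) * ((e - 1) / e)" by simp
      also have "\<dots> \<le> (S / (m * R)) * 1"
        using c1 c2 by (rule mult_left_mono)
      also have "\<dots> = (S / R) / m" by simp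
      also have "\<dots> \<le> real n / m"
        using divide_right_mono[OF c3, of m] that by simp
      finally have up: "S / (m * e) * ln (S / R) \<le> real n / m" .
      have "0 \<le> S / (m * e) * ln (S / R)" using c0 ln0 by (rule mult_nonneg_nonneg)
      then show ?thesis using pay_eq up by simp
    qed
    have P: "((\<lambda>m. soft_pay n m b i) \<longlongrightarrow> b i) at_top"
    proof (rule tendsto_sandwich)
      show "\<forall>\<^sub>F m in at_top. b i - real n / m \<le> soft_pay n m b i"
        using eventually_gt_at_top[of "0::real"] by (rule eventually_mono) (use bnd in force)
      show "\<forall>\<^sub>F m in at_top. soft_pay n m b i \<le> b i"
        using eventually_gt_at_top[of "0::real"] by (rule eventually_mono) (use bnd in force)
      show "((\<lambda>m. b i) \<longlongrightarrow> b i) at_top" by simp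
      have "((\<lambda>m::real. b i - real n * inverse m) \<longlongrightarrow> b i - real n * 0) at_top"
        by (intro tendsto_diff tendsto_const tendsto_mult tendsto_inverse_0_at_top filterlim_ident)
      then show "((\<lambda>m::real. b i - real n / m) \<longlongrightarrow> b i) at_top" by (simp add: divide_inverse)
    qed
    have "min (b i) (second_bid n b) = b i" using les[OF assms(4) ik] by simp
    then show ?thesis using A P False unfolding T_def by simp
  qed
qed

end
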